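(* Let $\mathcal{A}$ be a MAD family and let $\mathcal{B}=\{s_n:n\in\omega\}$ be a block sequence such that there is no infinite $W\subseteq\omega$ with $\bigcup_{n\in W}s_n\in\mathcal{I}(\mathcal{A})$. Then there are an infinite $X\subseteq\omega$ and a countable $\mathcal{A}_0\subseteq\mathcal{A}$ such that $\mathcal{A}\setminus\mathcal{A}_0\subseteq\mathcal{J}(\mathcal{B}_X)$.
   Context: A MAD family is a maximal family of infinite subsets of $\omega$ with pairwise finite intersections; $\mathcal{I}(\mathcal{A})$ is the ideal generated by $\mathcal{A}$ and the finite sets. A block sequence is $\{s_n:n\in\omega\}$ with each $s_n$ a nonempty finite subset of $\omega$ and $\max s_n<\min s_{n+1}$. For such $\mathcal{B}=\{s_n\}$ and infinite $X\subseteq\omega$, $\mathcal{B}_X=\{s_n:n\in X\}$ (enumerated in increasing order of $n$), and for a block sequence $\{t_k\}$ the ideal $\mathcal{J}(\{t_k\})$ is the set of $A\subseteq\omega$ with $\lim_k |A\cap t_k|/|t_k|=0$. *)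

theory Defs
  imports "HOL-Analysis.Analysis" "HOL-Library.Countable_Set"
begin

definition almost_disjoint_family :: "nat set set \<Rightarrow> bool" where
  "almost_disjoint_family \<A> \<longleftrightarrow>
     (\<forall>A\<in>\<A>. infinite A) \<and> (\<forall>A\<in>\<A>. \<forall>B\<in>\<A>. A \<noteq> B \<longrightarrow> finite (A \<inter> B))"

definition MAD :: "nat set set \<Rightarrow> bool" where
  "MAD \<A> \<longleftrightarrow> almost_disjoint_family \<A> \<and>
     (\<forall>\<B>. almost_disjoint_family \<B> \<and> \<A> \<subseteq> \<B> \<longrightarrow> \<B> = \<A>)"

definition ideal_gen :: "nat set set \<Rightarrow> nat set set" where
  "ideal_gen \<A> = {Y. \<exists>F. finite F \<and> F \<subseteq> \<A> \<and> finite (Y - \<Union>F)}"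

definition block_sequence :: "(nat \<Rightarrow> nat set) \<Rightarrow> bool" where
  "block_sequence s \<longleftrightarrow>
     (\<forall>n. finite (s n) \<and> s n \<noteq> {}) \<and> (\<forall>n. Max (s n) < Min (s (Suc n)))"

definition subblocks :: "(nat \<Rightarrow> nat set) \<Rightarrow> nat set \<Rightarrow> (nat \<Rightarrow> nat set)" where
  "subblocks s X = (\<lambda>k. s (enumerate X k))"

definition density_ideal :: "(nat \<Rightarrow> nat set) \<Rightarrow> nat set set" where
  "density_ideal t = {A. (\<lambda>k. real (card (A \<inter> t k)) / real (card (t k))) \<longlonglongrightarrow> 0}"

end

theory Submission
  imports Defs
begin

lemma kwise:
  fixes W :: "'a \<Rightarrow> nat set"
  assumes "\<forall>F. F \<subseteq> S \<and> finite F \<and> card F = k \<longrightarrow> finite (X \<inter> (\<Inter>A\<in>F. W A))"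
    and "infinite X"
  shows "\<exists>X' F. X' \<subseteq> X \<and> infinite X' \<and> finite F \<and> F \<subseteq> S \<and> (\<forall>A\<in>S-F. finite (W A \<inter> X'))"
  using assms
proof (induction k arbitrary: X S)
  case 0
  then have "finite (X \<inter> (\<Inter>A\<in>{}. W A))" by (metis card.empty empty_subsetI finite.emptyI)
  then show ?case using 0 by simp
next
  case (Suc k)
  show ?case
  proof (cases "\<exists>A\<in>S. infinite (W A \<inter> X)")
    case False
    then show ?thesis using Suc.prems by (intro exI[of _ X] exI[of _ "{}"]) auto
  next
    case True
    then obtain A1 where A1: "A1 \<in> S" "infinite (W A1 \<inter> X)" by blast
    let ?X1 = "X \<inter> W A1"
    have C: "\<forall>F. F \<subseteq> S - {A1} \<and> finite F \<and> card F = k \<longrightarrow> finite (?X1 \<inter> (\<Inter>A\<in>F. W A))"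
    proof (intro allI impI)
      fix F assume F: "F \<subseteq> S - {A1} \<and> finite F \<and> card F = k"
      then have "insert A1 F \<subseteq> S \<and> finite (insert A1 F) \<and> card (insert A1 F) = Suc k"
        using A1 by (auto simp: card_insert_if)
      then have "finite (X \<inter> (\<Inter>A\<in>insert A1 F. W A))" using Suc.prems(1) by blast
      moreover have "X \<inter> (\<Inter>A\<in>insert A1 F. W A) = ?X1 \<inter> (\<Inter>A\<in>F. W A)" by auto
      ultimately show "finite (?X1 \<inter> (\<Inter>A\<in>F. W A))" by simp
    qed
    have "infinite ?X1" using A1 by (simp add: Int_commute)
    from Suc.IH[OF C this] obtain X' F where
      XF: "X' \<subseteq> ?X1" "infinite X'" "finite F" "F \<subseteq> S - {A1}" "\<forall>A\<in>S - {A1} - F. finite (W A \<inter> X')"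
      by blast
    then show ?thesis using A1 by (intro exI[of _ X'] exI[of _ "insert A1 F"]) auto
  qed
qed

lemma block_min:
  assumes "block_sequence s"
  shows "n \<le> Min (s n)"
proof (induction n)
  case 0 then show ?case by simp
next
  case (Suc n)
  have f: "finite (s n)" "s n \<noteq> {}" using assms unfolding block_sequence_def by auto
  have "Min (s n) \<le> Max (s n)" using f using f by (meson Max_in Min_le)
  moreover have "Max (s n) < Min (s (Suc n))" using assms unfolding block_sequence_def by auto
  ultimately show ?case using Suc by linarith
qed

lemma block_hit_finite:
  assumes "block_sequence s" "finite P"
  shows "finite {n. s n \<inter> P \<noteq> {}}"
proof -
  have "{n. s n \<inter> P \<noteq> {}} \<subseteq> (\<Union>x\<in>P. {..x})"
  proof
    fix n assume "n \<in> {n. s n \<inter> P \<noteq> {}}"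
    then obtain x where x: "x \<in> s n" "x \<in> P" by auto
    have "finite (s n)" using assms unfolding block_sequence_def by auto
    then have "Min (s n) \<le> x" using x by simp
    then have "n \<le> x" using block_min[OF assms(1), of n] by linarith
    then show "n \<in> (\<Union>x\<in>P. {..x})" using x by auto
  qed
  moreover have "finite (\<Union>x\<in>P. {..x})" using assms(2) by auto
  ultimately show ?thesis by (rule finite_subset)
qed

lemma heavy_finite:
  assumes ad: "almost_disjoint_family \<A>" and bs: "block_sequence s"
    and F: "F \<subseteq> \<A>" "finite F" "card F = Suc m"
  shows "finite (\<Inter>A\<in>F. {n. card (s n) \<le> m * card (A \<inter> s n)})"
proof -
  let ?P = "\<Union>p\<in>{p\<in>F\<times>F. fst p \<noteq> snd p}. fst p \<inter> snd p"
  have Pfin: "finite ?P"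
  proof (rule finite_UN_I)
    show "finite {p\<in>F\<times>F. fst p \<noteq> snd p}" using F by auto
    fix p assume "p \<in> {p\<in>F\<times>F. fst p \<noteq> snd p}"
    then have "fst p \<in> \<A>" "snd p \<in> \<A>" "fst p \<noteq> snd p" using F by auto
    then show "finite (fst p \<inter> snd p)" using ad unfolding almost_disjoint_family_def by blast
  qed
  have "(\<Inter>A\<in>F. {n. card (s n) \<le> m * card (A \<inter> s n)}) \<subseteq> {n. s n \<inter> ?P \<noteq> {}}"
  proof
    fix n assume n: "n \<in> (\<Inter>A\<in>F. {n. card (s n) \<le> m * card (A \<inter> s n)})"
    have sn: "finite (s n)" "s n \<noteq> {}" using bs unfolding block_sequence_def by auto
    then have cpos: "card (s n) > 0" by (simp add: card_gt_0_iff)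
    show "n \<in> {n. s n \<inter> ?P \<noteq> {}}"
    proof (rule ccontr)
      assume "n \<notin> {n. s n \<inter> ?P \<noteq> {}}"
      then have disj: "\<forall>A\<in>F. \<forall>B\<in>F. A \<noteq> B \<longrightarrow> (A \<inter> s n) \<inter> (B \<inter> s n) = {}"
      proof (intro ballI impI)
        fix A B assume h: "n \<notin> {n. s n \<inter> ?P \<noteq> {}}" "A \<in> F" "B \<in> F" "A \<noteq> B"
        have "A \<inter> B \<subseteq> ?P"
        proof
          fix z assume "z \<in> A \<inter> B"
          moreover have "(A, B) \<in> {p\<in>F\<times>F. fst p \<noteq> snd p}" using h by simp
          ultimately show "z \<in> ?P" by (intro UN_I[of "(A, B)"]) simp_all
        qed
        have e: "s n \<inter> ?P = {}" using h(1) by simp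
        have "(A \<inter> s n) \<inter> (B \<inter> s n) = s n \<inter> (A \<inter> B)" by auto
        also have "\<dots> \<subseteq> s n \<inter> ?P" using \<open>A \<inter> B \<subseteq> ?P\<close> by (rule Int_mono[OF order_refl])
        finally show "(A \<inter> s n) \<inter> (B \<inter> s n) = {}" using e by simp
      qed
      have "card (\<Union>A\<in>F. A \<inter> s n) = (\<Sum>A\<in>F. card (A \<inter> s n))"
        using disj F sn by (intro card_UN_disjoint) auto
      moreover have "card (\<Union>A\<in>F. A \<inter> s n) \<le> card (s n)"
        using sn by (intro card_mono) auto
      ultimately have le: "(\<Sum>A\<in>F. card (A \<inter> s n)) \<le> card (s n)" by simp
      have "Suc m * card (s n) = (\<Sum>A\<in>F. card (s n))" using F by simp
      also have "\<dots> \<le> (\<Sum>A\<in>F. m * card (A \<inter> s n))"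
        using n by (intro sum_mono) auto
      also have "\<dots> = m * (\<Sum>A\<in>F. card (A \<inter> s n))" by (simp add: sum_distrib_left)
      also have "\<dots> \<le> m * card (s n)" using le by simp
      finally show False using cpos by simp
    qed
  qed
  moreover have "finite {n. s n \<inter> ?P \<noteq> {}}" using block_hit_finite[OF bs Pfin] .
  ultimately show ?thesis by (rule finite_subset)
qed

theorem mainTheorem16:
  fixes \<A> :: "nat set set" and s :: "nat \<Rightarrow> nat set"
  assumes "MAD \<A>"
    and "block_sequence s"
    and "\<not> (\<exists>W. infinite W \<and> (\<Union>n\<in>W. s n) \<in> ideal_gen \<A>)"
  shows "\<exists>X \<A>\<^sub>0. infinite X \<and> countable \<A>\<^sub>0 \<and> \<A>\<^sub>0 \<subseteq> \<A> \<and>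
           \<A> - \<A>\<^sub>0 \<subseteq> density_ideal (subblocks s X)"
proof -
  have ad: "almost_disjoint_family \<A>" using assms(1) unfolding MAD_def by auto
  define W where "W j A = {n. card (s n) \<le> Suc j * card (A \<inter> s n)}" for j A
  have step: "\<forall>j Y. \<exists>p. infinite Y \<longrightarrow> (fst p \<subseteq> Y \<and> infinite (fst p) \<and> finite (snd p) \<and> snd p \<subseteq> \<A>
      \<and> (\<forall>A\<in>\<A>-snd p. finite (W j A \<inter> fst p)))"
  proof (intro allI)
    fix j and Y :: "nat set"
    show "\<exists>p. infinite Y \<longrightarrow> (fst p \<subseteq> Y \<and> infinite (fst p) \<and> finite (snd p) \<and> snd p \<subseteq> \<A>
      \<and> (\<forall>A\<in>\<A>-snd p. finite (W j A \<inter> fst p)))"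
    proof (cases "infinite Y")
      case True
      have "\<forall>F. F \<subseteq> \<A> \<and> finite F \<and> card F = Suc (Suc j) \<longrightarrow> finite (Y \<inter> (\<Inter>A\<in>F. W j A))"
        using heavy_finite[OF ad assms(2)] unfolding W_def by blast
      from kwise[OF this True] obtain X' F where
        "X' \<subseteq> Y \<and> infinite X' \<and> finite F \<and> F \<subseteq> \<A> \<and> (\<forall>A\<in>\<A>-F. finite (W j A \<inter> X'))" by blast
      then show ?thesis by (intro exI[of _ "(X', F)"]) auto
    qed auto
  qed
  then obtain g where g: "\<And>j Y. infinite Y \<Longrightarrow> fst (g j Y) \<subseteq> Y \<and> infinite (fst (g j Y)) \<and>
      finite (snd (g j Y)) \<and> snd (g j Y) \<subseteq> \<A> \<and> (\<forall>A\<in>\<A>-snd (g j Y). finite (W j A \<inter> fst (g j Y)))"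
    by metis
  define Ys where "Ys = rec_nat UNIV (\<lambda>j Y. fst (g j Y))"
  have Ys0: "Ys 0 = UNIV" and YsS: "\<And>j. Ys (Suc j) = fst (g j (Ys j))" by (simp_all add: Ys_def)
  have Ysinf: "infinite (Ys j)" for j
    by (induction j) (simp_all add: Ys0 YsS g)
  have Yssub: "Ys (Suc j) \<subseteq> Ys j" for j using g[OF Ysinf[of j]] YsS by simp
  have Ysdec: "i \<le> j \<Longrightarrow> Ys j \<subseteq> Ys i" for i j
    using Yssub by (metis decseq_SucI decseqD)
  define F where "F j = snd (g j (Ys j))" for j
  have Fprops: "finite (F j)" "F j \<subseteq> \<A>" "\<forall>A\<in>\<A>-F j. finite (W j A \<inter> Ys (Suc j))" for j
    using g[OF Ysinf[of j]] unfolding F_def YsS by auto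
  have ex_next: "\<exists>m'. m' \<in> Ys (Suc j) \<and> m < m'" for j m
    using Ysinf[of "Suc j"] unfolding infinite_nat_iff_unbounded by blast
  define x where "x = rec_nat 0 (\<lambda>j m. SOME m'. m' \<in> Ys (Suc j) \<and> m < m')"
  have x0: "x 0 = 0" and xS: "x (Suc j) = (SOME m'. m' \<in> Ys (Suc j) \<and> x j < m')" for j
    by (simp_all add: x_def)
  have xS': "x (Suc j) \<in> Ys (Suc j) \<and> x j < x (Suc j)" for j
    unfolding xS by (rule someI_ex[OF ex_next])
  have xin: "x j \<in> Ys j" for j
    by (cases j) (simp_all add: Ys0 xS')
  have smx: "strict_mono x" using xS' by (simp add: strict_mono_Suc_iff)
  define X where "X = range x"
  have Xinf: "infinite X" unfolding X_def
    using smx strict_mono_imp_inj_on by (metis finite_imageD infinite_UNIV_nat)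
  define A0 where "A0 = (\<Union>j. F j)"
  have A0c: "countable A0" unfolding A0_def using Fprops(1) by (auto intro: countable_finite)
  have A0s: "A0 \<subseteq> \<A>" unfolding A0_def using Fprops(2) by auto
  have WX: "finite (W j A \<inter> X)" if A: "A \<in> \<A> - A0" for j A
  proof -
    have "W j A \<inter> X \<subseteq> x ` {..j} \<union> (W j A \<inter> Ys (Suc j))"
    proof
      fix n assume n: "n \<in> W j A \<inter> X"
      then obtain i where i: "n = x i" unfolding X_def by auto
      show "n \<in> x ` {..j} \<union> (W j A \<inter> Ys (Suc j))"
      proof (cases "i \<le> j")
        case False
        then have "x i \<in> Ys (Suc j)" using xin[of i] Ysdec[of "Suc j" i] by auto
        then show ?thesis using n i by auto
      qed (use i in auto)
    qed
    moreover have "finite (W j A \<inter> Ys (Suc j))" using Fprops(3)[of j] A unfolding A0_def by auto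
    ultimately show ?thesis by (meson finite_Un finite_imageI finite_atMost finite_subset)
  qed
  have "\<A> - A0 \<subseteq> density_ideal (subblocks s X)"
  proof
    fix A assume A: "A \<in> \<A> - A0"
    let ?e = "enumerate X"
    have sme: "strict_mono ?e" using Xinf by (rule strict_mono_enumerate)
    have "(\<lambda>k. real (card (A \<inter> s (?e k))) / real (card (s (?e k)))) \<longlonglongrightarrow> 0"
    proof (rule LIMSEQ_I)
      fix r :: real assume r: "0 < r"
      obtain j where j: "inverse (real (Suc j)) < r" using reals_Archimedean[OF r] by blast
      have fin: "finite (?e -` (W j A \<inter> X))"
        using WX[OF A] sme strict_mono_imp_inj_on by (intro finite_vimageI) auto
      obtain N where N: "?e -` (W j A \<inter> X) \<subseteq> {..<N}"
        using finite_nat_bounded[OF fin] by blast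
      show "\<exists>no. \<forall>k\<ge>no. norm (real (card (A \<inter> s (?e k))) / real (card (s (?e k))) - 0) < r"
      proof (intro exI allI impI)
        fix k assume k: "N \<le> k"
        have "?e k \<in> X" using Xinf by (simp add: enumerate_in_set)
        have "k \<notin> {..<N}" using k by simp
        then have "k \<notin> ?e -` (W j A \<inter> X)" using N by blast
        then have "?e k \<notin> W j A" using \<open>?e k \<in> X\<close> by simp
        then have lt: "Suc j * card (A \<inter> s (?e k)) < card (s (?e k))" unfolding W_def by auto
        then have cpos: "0 < real (card (s (?e k)))" by simp
        have "real (Suc j) * real (card (A \<inter> s (?e k))) < real (card (s (?e k)))"
          using lt by (metis of_nat_less_iff of_nat_mult)
        then have "real (card (A \<inter> s (?e k))) / real (card (s (?e k))) < inverse (real (Suc j))"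
          using cpos by (simp add: field_simps)
        then show "norm (real (card (A \<inter> s (?e k))) / real (card (s (?e k))) - 0) < r"
          using j by simp
      qed
    qed
    then show "A \<in> density_ideal (subblocks s X)"
      unfolding density_ideal_def subblocks_def by simp
  qed
  then show ?thesis using Xinf A0c A0s by blast
qed

end
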